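(* Let $\mathcal V\subseteq B(H)$ be an operator system and suppose $p\in\mathcal V$ is a projection in $B(H)$. Then for any $x\in\mathcal V$ with $x=x^*$, we have $pxp\ge0$ in $B(H)$ if and only if for every $\epsilon>0$ there exists $t>0$ such that $x+\epsilon p+t(I-p)\ge 0$. *)

theory Defs
  imports "HOL-Analysis.Analysis" "HOL-Library.Complex_Order"
begin

text \<open>The order on complex numbers is the
library order (0 <= z iff z is a nonnegative real).\<close>

locale chilbert =
  fixes sc :: "complex \<Rightarrow> 'h::ab_group_add \<Rightarrow> 'h"
    and ip :: "'h \<Rightarrow> 'h \<Rightarrow> complex"
  assumes sc_one: "sc 1 x = x"
    and sc_assoc: "sc a (sc b x) = sc (a * b) x"
    and sc_add_left: "sc (a + b) x = sc a x + sc b x"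
    and sc_add_right: "sc a (x + y) = sc a x + sc a y"
    and ip_add_left: "ip (x + y) z = ip x z + ip y z"
    and ip_sc_left: "ip (sc a x) y = a * ip x y"
    and ip_conj_sym: "ip y x = cnj (ip x y)"
    and ip_nonneg: "0 \<le> ip x x"
    and ip_definite: "ip x x = 0 \<Longrightarrow> x = 0"
    and complete: "\<And>f :: nat \<Rightarrow> 'h.
        (\<forall>e>0. \<exists>N. \<forall>m\<ge>N. \<forall>n\<ge>N. sqrt (Re (ip (f m - f n) (f m - f n))) < e)
        \<Longrightarrow> (\<exists>l. (\<lambda>n. sqrt (Re (ip (f n - l) (f n - l)))) \<longlonglongrightarrow> 0)"

definition hnorm :: "('h \<Rightarrow> 'h \<Rightarrow> complex) \<Rightarrow> 'h \<Rightarrow> real" where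
  "hnorm ip x = sqrt (Re (ip x x))"

definition bounded_ops :: "(complex \<Rightarrow> 'h::ab_group_add \<Rightarrow> 'h) \<Rightarrow> ('h \<Rightarrow> 'h \<Rightarrow> complex)
    \<Rightarrow> ('h \<Rightarrow> 'h) set" where
  "bounded_ops sc ip = {T. (\<forall>x y. T (x + y) = T x + T y) \<and> (\<forall>a x. T (sc a x) = sc a (T x))
      \<and> (\<exists>K. \<forall>x. hnorm ip (T x) \<le> K * hnorm ip x)}"

definition is_adjoint :: "('h \<Rightarrow> 'h \<Rightarrow> complex) \<Rightarrow> ('h \<Rightarrow> 'h) \<Rightarrow> ('h \<Rightarrow> 'h) \<Rightarrow> bool" where
  "is_adjoint ip T S \<longleftrightarrow> (\<forall>u v. ip (T u) v = ip u (S v))"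

definition selfadjoint_op :: "('h \<Rightarrow> 'h \<Rightarrow> complex) \<Rightarrow> ('h \<Rightarrow> 'h) \<Rightarrow> bool" where
  "selfadjoint_op ip T \<longleftrightarrow> is_adjoint ip T T"

definition positive_op :: "('h \<Rightarrow> 'h \<Rightarrow> complex) \<Rightarrow> ('h \<Rightarrow> 'h) \<Rightarrow> bool" where
  "positive_op ip T \<longleftrightarrow> (\<forall>u. 0 \<le> ip (T u) u)"

definition projection_op :: "(complex \<Rightarrow> 'h::ab_group_add \<Rightarrow> 'h) \<Rightarrow> ('h \<Rightarrow> 'h \<Rightarrow> complex)
    \<Rightarrow> ('h \<Rightarrow> 'h) \<Rightarrow> bool" where
  "projection_op sc ip p \<longleftrightarrow> p \<in> bounded_ops sc ip \<and> p \<circ> p = p \<and> selfadjoint_op ip p"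

definition operator_system :: "(complex \<Rightarrow> 'h::ab_group_add \<Rightarrow> 'h) \<Rightarrow> ('h \<Rightarrow> 'h \<Rightarrow> complex)
    \<Rightarrow> ('h \<Rightarrow> 'h) set \<Rightarrow> bool" where
  "operator_system sc ip V \<longleftrightarrow> V \<subseteq> bounded_ops sc ip
     \<and> (\<lambda>u. 0) \<in> V
     \<and> (\<forall>S\<in>V. \<forall>T\<in>V. (\<lambda>u. S u + T u) \<in> V)
     \<and> (\<forall>a. \<forall>T\<in>V. (\<lambda>u. sc a (T u)) \<in> V)
     \<and> id \<in> V
     \<and> (\<forall>T\<in>V. \<exists>S\<in>V. is_adjoint ip T S)"

end

theory Submission
  imports Defs
begin

lemma additive_diff:
  fixes T :: "'a::ab_group_add \<Rightarrow> 'b::ab_group_add"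
  assumes "\<forall>x y. T (x + y) = T x + T y"
  shows "T (y - z) = T y - T z" and "T 0 = 0"
proof -
  have "T y = T ((y - z) + z)" by simp
  also have "\<dots> = T (y - z) + T z" using assms by blast
  finally show "T (y - z) = T y - T z" by (simp add: eq_diff_eq)
  have "T 0 = T (0 + 0)" by simp
  also have "\<dots> = T 0 + T 0" using assms by blast
  finally show "T 0 = 0" by simp
qed

lemma real_of_cnj_eq: "cnj z = z \<Longrightarrow> Im z = 0"
proof -
  assume "cnj z = z"
  then have "Im (cnj z) = Im z" by simp
  then show ?thesis by simp
qed

context chilbert
begin

lemma ip_diff_left: "ip (y - w) z = ip y z - ip w z"
  using additive_diff(1)[of "\<lambda>y. ip y z"] ip_add_left by auto

lemma ip_add_right: "ip z (y + w) = ip z y + ip z w"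
  by (metis ip_conj_sym ip_add_left complex_cnj_add)

lemma ip_diff_right: "ip z (y - w) = ip z y - ip z w"
  by (metis ip_conj_sym ip_diff_left complex_cnj_diff)

lemma ip_zero_right: "ip z 0 = 0"
  using ip_diff_right[of z 0 0] by simp

lemma ip_sc_right: "ip z (sc a y) = cnj a * ip z y"
  by (metis ip_conj_sym ip_sc_left complex_cnj_mult)

lemma ip_self: "Im (ip y y) = 0" "0 \<le> Re (ip y y)"
  using ip_nonneg[of y] by (auto simp: less_eq_complex_def)

lemma sc_zero: "sc a 0 = 0"
proof -
  have "sc a 0 = sc a (0 + 0)" by simp
  also have "\<dots> = sc a 0 + sc a 0" by (rule sc_add_right)
  finally show ?thesis by simp
qed

lemma quad_expand:
  "Re (ip (sc (of_real r) y + z) (sc (of_real r) y + z))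
     = r^2 * Re (ip y y) + 2 * r * Re (ip z y) + Re (ip z z)"
proof -
  have "ip (sc (of_real r) y + z) (sc (of_real r) y + z)
     = of_real r * of_real r * ip y y + of_real r * ip y z + of_real r * ip z y + ip z z"
    by (simp add: ip_add_left ip_add_right ip_sc_left ip_sc_right algebra_simps)
  moreover have "ip y z = cnj (ip z y)" by (rule ip_conj_sym)
  ultimately show ?thesis by (simp add: power2_eq_square algebra_simps)
qed

end

theorem lemma4p5:
  fixes sc :: "complex \<Rightarrow> 'h::ab_group_add \<Rightarrow> 'h"
    and ip :: "'h \<Rightarrow> 'h \<Rightarrow> complex"
    and V :: "('h \<Rightarrow> 'h) set"
    and p x :: "'h \<Rightarrow> 'h"
  assumes "chilbert sc ip"
    and "operator_system sc ip V"
    and "p \<in> V" and "projection_op sc ip p"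
    and "x \<in> V" and "selfadjoint_op ip x"
  shows "positive_op ip (p \<circ> x \<circ> p) \<longleftrightarrow>
    (\<forall>\<epsilon>::real. \<epsilon> > 0 \<longrightarrow> (\<exists>t::real. t > 0 \<and>
       positive_op ip (\<lambda>u. x u + sc (complex_of_real \<epsilon>) (p u) + sc (complex_of_real t) (u - p u))))"
proof -
  interpret H: chilbert sc ip by fact
  from assms(4) have pb: "p \<in> bounded_ops sc ip" and pp: "p \<circ> p = p" and ps: "selfadjoint_op ip p"
    unfolding projection_op_def by auto
  from assms(2,5) have xb: "x \<in> bounded_ops sc ip" unfolding operator_system_def by auto
  have padd: "\<forall>y z. p (y+z) = p y + p z" using pb unfolding bounded_ops_def by auto
  have xadd: "\<forall>y z. x (y+z) = x y + x z" using xb unfolding bounded_ops_def by auto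
  obtain K where K: "\<forall>y. hnorm ip (x y) \<le> K * hnorm ip y" using xb unfolding bounded_ops_def by auto
  have ppu: "p (p u) = p u" for u using pp by (metis comp_apply)
  have padj: "ip (p u) v = ip u (p v)" for u v using ps unfolding selfadjoint_op_def is_adjoint_def by auto
  have xadj: "ip (x u) v = ip u (x v)" for u v using assms(6) unfolding selfadjoint_op_def is_adjoint_def by auto
  have pdiff: "p (y - z) = p y - p z" for y z using additive_diff(1)[OF padd] .
  have xreal: "Im (ip (x y) y) = 0" for y
    by (rule real_of_cnj_eq) (metis xadj H.ip_conj_sym)
  have K2: "Re (ip (x y) (x y)) \<le> K^2 * Re (ip y y)" for y
  proof -
    have "hnorm ip (x y) \<le> K * hnorm ip y" using K by auto
    moreover have "0 \<le> hnorm ip (x y)" using H.ip_self(2)[of "x y"] by (simp add: hnorm_def)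
    ultimately have "(hnorm ip (x y))^2 \<le> (K * hnorm ip y)^2" by (rule power_mono)
    then show ?thesis using H.ip_self(2)[of "x y"] H.ip_self(2)[of y] by (simp add: hnorm_def power_mult_distrib)
  qed
  have pxp: "ip ((p \<circ> x \<circ> p) u) u = ip (x (p u)) (p u)" for u
    by (simp add: padj)
  have expand: "ip (x u + sc (complex_of_real e) (p u) + sc (complex_of_real t) (u - p u)) u
     = ip (x (p u)) (p u) + ip (x (u - p u)) (p u) + cnj (ip (x (u - p u)) (p u))
       + ip (x (u - p u)) (u - p u) + of_real e * ip (p u) (p u) + of_real t * ip (u - p u) (u - p u)"
    for u e t
  proof -
    define a where "a = p u"
    define b where "b = u - p u"
    have hu: "u = a + b" by (simp add: a_def b_def)
    have pbz: "p b = 0" by (simp add: b_def pdiff ppu)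
    have iab: "ip a b = 0" by (simp add: a_def padj pbz H.ip_zero_right)
    have iba: "ip b a = 0" using iab H.ip_conj_sym by (metis complex_cnj_zero)
    have xab: "ip (x a) b = cnj (ip (x b) a)" by (metis xadj H.ip_conj_sym)
    have "ip (x u + sc (complex_of_real e) (p u) + sc (complex_of_real t) (u - p u)) u
      = ip (x u + sc (complex_of_real e) a + sc (complex_of_real t) b) u"
      by (simp add: a_def b_def)
    also have "\<dots> = ip (x a + x b + sc (complex_of_real e) a + sc (complex_of_real t) b) (a + b)"
    proof -
      have xu: "x u = x a + x b" using xadd hu by metis
      show ?thesis by (simp only: xu hu[symmetric])
    qed
    also have "\<dots> = ip (x a) a + ip (x b) a + cnj (ip (x b) a) + ip (x b) b
        + of_real e * ip a a + of_real t * ip b b"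
      by (simp add: H.ip_add_left H.ip_add_right H.ip_sc_left iab iba xab algebra_simps)
    finally show ?thesis by (simp add: a_def b_def)
  qed
  show ?thesis
  proof
    assume pos: "positive_op ip (p \<circ> x \<circ> p)"
    show "\<forall>\<epsilon>::real. \<epsilon> > 0 \<longrightarrow> (\<exists>t::real. t > 0 \<and>
       positive_op ip (\<lambda>u. x u + sc (complex_of_real \<epsilon>) (p u) + sc (complex_of_real t) (u - p u)))"
    proof (intro allI impI)
      fix e :: real assume e: "e > 0"
      define t where "t = 2 * K^2 / e + (1 + K^2) / 2 + 1"
      have t0: "t > 0" 
      proof -
        have "0 \<le> 2 * K^2 / e" using e by simp
        moreover have "0 \<le> (1 + K^2) / 2" by (simp add: add_nonneg_nonneg)
        ultimately show ?thesis unfolding t_def by linarith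
      qed
      have "positive_op ip (\<lambda>u. x u + sc (complex_of_real e) (p u) + sc (complex_of_real t) (u - p u))"
        unfolding positive_op_def
      proof
        fix u
        define a where "a = p u"
        define b where "b = u - p u"
        define A where "A = Re (ip (x a) a)"
        define C where "C = Re (ip (x b) a)"
        define D where "D = Re (ip (x b) b)"
        define N where "N = Re (ip (x b) (x b))"
        define \<alpha> where "\<alpha> = Re (ip a a)"
        define \<beta> where "\<beta> = Re (ip b b)"
        have A0: "A \<ge> 0" using pos pxp[of u] unfolding positive_op_def A_def a_def
          by (metis less_eq_complex_def zero_complex.sel(1))
        have \<alpha>0: "\<alpha> \<ge> 0" and \<beta>0: "\<beta> \<ge> 0" and N0: "N \<ge> 0"
          using H.ip_self unfolding \<alpha>_def \<beta>_def N_def by auto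
        have NK: "N \<le> K^2 * \<beta>" unfolding N_def \<beta>_def by (rule K2)
        have q1: "0 \<le> (e/2)^2 * \<alpha> + 2 * (e/2) * C + N"
          using H.ip_self(2)[of "sc (of_real (e/2)) a + x b"] H.quad_expand[of "e/2" a "x b"]
          unfolding \<alpha>_def C_def N_def by simp
        have q2: "0 \<le> \<beta> + 2 * D + N"
          using H.ip_self(2)[of "sc (of_real 1) b + x b"] H.quad_expand[of 1 b "x b"]
          unfolding \<beta>_def D_def N_def by simp
        have "0 \<le> A + 2*C + D + e * \<alpha> + t * \<beta>"
        proof -
          have "0 \<le> ((e/2)^2 * \<alpha> + 2 * (e/2) * C + N) / e" using q1 e by simp
          also have "\<dots> = (e/4) * \<alpha> + C + N / e" using e by (simp add: field_simps power2_eq_square)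
          finally have c1: "0 \<le> (e/4) * \<alpha> + C + N / e" .
          have c2: "N / e \<le> K^2 * \<beta> / e" using NK e by (simp add: divide_right_mono)
          have d: "2 * D \<ge> -((1 + K^2) * \<beta>)" using q2 NK by (simp add: algebra_simps)
          have tb: "t * \<beta> = 2 * (K^2 * \<beta> / e) + ((1 + K^2) * \<beta>) / 2 + \<beta>"
            unfolding t_def by (simp add: field_simps)
          have ea: "e * \<alpha> = 4 * ((e/4) * \<alpha>)" by simp
          have "0 \<le> (e/4) * \<alpha>" using e \<alpha>0 by simp
          then show ?thesis using c1 c2 d tb ea A0 \<beta>0 by linarith
        qed
        moreover have "ip (x u + sc (complex_of_real e) (p u) + sc (complex_of_real t) (u - p u)) u
            = complex_of_real (A + 2*C + D + e * \<alpha> + t * \<beta>)"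
          unfolding expand
          by (simp add: complex_eq_iff xreal H.ip_self A_def C_def D_def \<alpha>_def \<beta>_def a_def b_def)
        ultimately show "0 \<le> ip (x u + sc (complex_of_real e) (p u) + sc (complex_of_real t) (u - p u)) u"
          by (simp only:) (simp add: less_eq_complex_def)
      qed
      then show "\<exists>t::real. t > 0 \<and>
       positive_op ip (\<lambda>u. x u + sc (complex_of_real e) (p u) + sc (complex_of_real t) (u - p u))"
        using t0 by blast
    qed
  next
    assume H: "\<forall>\<epsilon>::real. \<epsilon> > 0 \<longrightarrow> (\<exists>t::real. t > 0 \<and>
       positive_op ip (\<lambda>u. x u + sc (complex_of_real \<epsilon>) (p u) + sc (complex_of_real t) (u - p u)))"
    show "positive_op ip (p \<circ> x \<circ> p)"
      unfolding positive_op_def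
    proof
      fix v
      define w where "w = p v"
      have pw: "p w = w" by (simp add: w_def ppu)
      define R where "R = Re (ip (x w) w)"
      define M where "M = Re (ip w w)"
      have M0: "M \<ge> 0" unfolding M_def by (rule H.ip_self)
      have key: "0 \<le> R + e * M" if e: "e > 0" for e
      proof -
        obtain t where "positive_op ip (\<lambda>u. x u + sc (complex_of_real e) (p u) + sc (complex_of_real t) (u - p u))"
          using H e by blast
        then have "0 \<le> ip (x w + sc (complex_of_real e) (p w) + sc (complex_of_real t) (w - p w)) w"
          unfolding positive_op_def by blast
        then have "0 \<le> ip (x w) w + of_real e * ip w w"
          by (simp add: pw H.sc_zero H.ip_add_left H.ip_sc_left)
        then show ?thesis unfolding R_def M_def by (simp add: less_eq_complex_def)
      qed
      have "R \<ge> 0"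
      proof (rule ccontr)
        assume "\<not> R \<ge> 0"
        then have R: "R < 0" by simp
        have "0 \<le> R + (-R/(M+1)) * M" proof (rule key)
          show "-R/(M+1) > 0" using R M0 by (simp add: divide_neg_pos add_nonneg_pos)
        qed
        moreover have "R + (-R/(M+1)) * M = R / (M+1)" using M0 by (simp add: field_simps)
        moreover have "R / (M+1) < 0" using R M0 by (simp add: divide_neg_pos)
        ultimately show False by simp
      qed
      then show "0 \<le> ip ((p \<circ> x \<circ> p) v) v"
        unfolding pxp using xreal[of w] by (simp add: less_eq_complex_def R_def w_def)
    qed
  qed
qed

end
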